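(* Let $(H,\Lambda)$ be a signified graph on exactly $9$ vertices such that every signified graph whose underlying graph is outerplanar admits a signified homomorphism to $(H,\Lambda)$. Then $(H,\Lambda)$ is isomorphic (by a sign-preserving isomorphism) to $SP_9$.
   Context: A signified graph $(G,\Sigma)$ is a simple graph $G$ with a set $\Sigma\subseteq E(G)$ of negative edges, other edges positive. A signified homomorphism of $(G,\Sigma)$ to $(H,\Lambda)$ is a map $V(G)\to V(H)$ sending every edge to an edge of the same sign. $SP_9$ is the complete graph on vertex set $\mathbb{F}_9$ where the edge $xy$ is negative iff $y-x$ is a non-square in $\mathbb{F}_9$. *)

theory Defs
  imports Main
begin

text \<open>A signified graph: finite vertex set V, symmetric irreflexive edge relation E on V,
  and a set of negative edges N (symmetric, N \<subseteq> E). Edges in E but not N are positive.\<close>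

definition signified_graph :: "'a set \<Rightarrow> ('a \<Rightarrow> 'a \<Rightarrow> bool) \<Rightarrow> ('a \<Rightarrow> 'a \<Rightarrow> bool) \<Rightarrow> bool" where
  "signified_graph V E N \<longleftrightarrow> finite V
     \<and> (\<forall>x y. E x y \<longrightarrow> x \<in> V \<and> y \<in> V)
     \<and> (\<forall>x. \<not> E x x)
     \<and> (\<forall>x y. E x y \<longrightarrow> E y x)
     \<and> (\<forall>x y. N x y \<longrightarrow> E x y)
     \<and> (\<forall>x y. N x y \<longrightarrow> N y x)"

text \<open>Outerplanarity: the vertices can be placed in convex position (on a circle, in the
  cyclic order given by a bijection to {0..<card V}) such that the edges, drawn as straight
  chords, pairwise do not cross.\<close>

definition outerplanar :: "'a set \<Rightarrow> ('a \<Rightarrow> 'a \<Rightarrow> bool) \<Rightarrow> bool" where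
  "outerplanar V E \<longleftrightarrow> (\<exists>p. bij_betw p V {0..<card V} \<and>
     (\<forall>a b c d. a \<in> V \<and> b \<in> V \<and> c \<in> V \<and> d \<in> V \<and> E a b \<and> E c d \<longrightarrow>
        \<not> (p a < p c \<and> p c < p b \<and> p b < p d)))"

definition signified_hom ::
  "'a set \<Rightarrow> ('a \<Rightarrow> 'a \<Rightarrow> bool) \<Rightarrow> ('a \<Rightarrow> 'a \<Rightarrow> bool) \<Rightarrow>
   'b set \<Rightarrow> ('b \<Rightarrow> 'b \<Rightarrow> bool) \<Rightarrow> ('b \<Rightarrow> 'b \<Rightarrow> bool) \<Rightarrow> ('a \<Rightarrow> 'b) \<Rightarrow> bool" where
  "signified_hom V E N V' E' N' g \<longleftrightarrow>
     (\<forall>x\<in>V. g x \<in> V') \<and>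
     (\<forall>x y. E x y \<longrightarrow> E' (g x) (g y) \<and> (N' (g x) (g y) \<longleftrightarrow> N x y))"

definition signified_iso ::
  "'a set \<Rightarrow> ('a \<Rightarrow> 'a \<Rightarrow> bool) \<Rightarrow> ('a \<Rightarrow> 'a \<Rightarrow> bool) \<Rightarrow>
   'b set \<Rightarrow> ('b \<Rightarrow> 'b \<Rightarrow> bool) \<Rightarrow> ('b \<Rightarrow> 'b \<Rightarrow> bool) \<Rightarrow> ('a \<Rightarrow> 'b) \<Rightarrow> bool" where
  "signified_iso V E N V' E' N' f \<longleftrightarrow> bij_betw f V V' \<and>
     (\<forall>x\<in>V. \<forall>y\<in>V. (E' (f x) (f y) \<longleftrightarrow> E x y) \<and> (N' (f x) (f y) \<longleftrightarrow> N x y))"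

text \<open>The field F_9 = F_3[i]/(i^2+1), elements (a,b) \<leftrightarrow> a + b i with a,b \<in> {0,1,2}.\<close>

definition F9 :: "(int \<times> int) set" where
  "F9 = {0..2} \<times> {0..2}"

definition f9_sub :: "int \<times> int \<Rightarrow> int \<times> int \<Rightarrow> int \<times> int" where
  "f9_sub x y = ((fst x - fst y) mod 3, (snd x - snd y) mod 3)"

definition f9_mul :: "int \<times> int \<Rightarrow> int \<times> int \<Rightarrow> int \<times> int" where
  "f9_mul x y = ((fst x * fst y - snd x * snd y) mod 3, (fst x * snd y + snd x * fst y) mod 3)"

definition f9_nonsquare :: "int \<times> int \<Rightarrow> bool" where
  "f9_nonsquare z \<longleftrightarrow> z \<in> F9 \<and> (\<forall>w\<in>F9. f9_mul w w \<noteq> z)"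

definition SP9_E :: "int \<times> int \<Rightarrow> int \<times> int \<Rightarrow> bool" where
  "SP9_E x y \<longleftrightarrow> x \<in> F9 \<and> y \<in> F9 \<and> x \<noteq> y"

definition SP9_N :: "int \<times> int \<Rightarrow> int \<times> int \<Rightarrow> bool" where
  "SP9_N x y \<longleftrightarrow> SP9_E x y \<and> f9_nonsquare (f9_sub y x)"

end

theory Submission
  imports Defs "HOL-Library.Countable" "HOL-Library.List_Lexorder"
begin

lemma transfer_nat:
  fixes V :: "'a::countable set"
  assumes H: "\<forall>(V::nat set) E N. signified_graph V E N \<and> outerplanar V E \<longrightarrow>
           (\<exists>g. signified_hom V E N VH EH NH g)"
    and sg: "signified_graph V E N" and op: "outerplanar V E"
  shows "\<exists>g. signified_hom V E N VH EH NH g"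
proof -
  define V' where "V' = to_nat ` V"
  define E' where "E' = (\<lambda>x y. x \<in> V' \<and> y \<in> V' \<and> E (from_nat x) (from_nat y))"
  define N' where "N' = (\<lambda>x y. x \<in> V' \<and> y \<in> V' \<and> N (from_nat x) (from_nat y))"
  have inj: "inj_on to_nat V" by simp
  have cardV: "card V' = card V" unfolding V'_def using inj by (simp add: card_image)
  have sg': "signified_graph V' E' N'"
    using sg unfolding signified_graph_def E'_def N'_def V'_def
    by (auto simp: image_iff)
  obtain p where p: "bij_betw p V {0..<card V}" and nc: "\<forall>a b c d. a \<in> V \<and> b \<in> V \<and> c \<in> V \<and> d \<in> V \<and> E a b \<and> E c d \<longrightarrow>
        \<not> (p a < p c \<and> p c < p b \<and> p b < p d)"
    using op unfolding outerplanar_def by blast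
  have bfn: "bij_betw from_nat V' V"
    unfolding V'_def by (rule bij_betw_imageI) (auto simp: inj_on_def image_image)
  have "bij_betw (p \<circ> from_nat) V' {0..<card V'}"
    using bij_betw_trans[OF bfn p] cardV by simp
  moreover have "\<forall>a b c d. a \<in> V' \<and> b \<in> V' \<and> c \<in> V' \<and> d \<in> V' \<and> E' a b \<and> E' c d \<longrightarrow>
        \<not> ((p \<circ> from_nat) a < (p \<circ> from_nat) c \<and> (p \<circ> from_nat) c < (p \<circ> from_nat) b \<and> (p \<circ> from_nat) b < (p \<circ> from_nat) d)"
    using nc unfolding E'_def V'_def by auto
  ultimately have op': "outerplanar V' E'" unfolding outerplanar_def by blast
  obtain g where g: "signified_hom V' E' N' VH EH NH g" using H sg' op' by blast
  have "signified_hom V E N VH EH NH (g \<circ> to_nat)"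
    using g sg unfolding signified_hom_def signified_graph_def E'_def N'_def V'_def
    by auto
  then show ?thesis by blast
qed

lemma rank_mono2:
  fixes V :: "'a::linorder set"
  assumes "finite V" "w \<in> V" "u \<in> V" "u < w"
  shows "card {x\<in>V. x < u} < card {x\<in>V. x < w}"
proof (rule psubset_card_mono)
  show "finite {x\<in>V. x < w}" using assms by simp
  show "{x\<in>V. x < u} \<subset> {x\<in>V. x < w}"
    using assms by auto
qed

lemma rank_iff:
  fixes V :: "'a::linorder set"
  assumes "finite V" "w \<in> V" "u \<in> V"
  shows "card {x\<in>V. x < u} < card {x\<in>V. x < w} \<longleftrightarrow> u < w"
  using rank_mono2[OF assms] rank_mono2[OF assms(1,3,2)]
  by (metis less_asym' linorder_neqE)

lemma rank_bij:
  fixes V :: "'a::linorder set"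
  assumes "finite V"
  shows "bij_betw (\<lambda>w. card {x\<in>V. x < w}) V {0..<card V}"
proof -
  let ?r = "\<lambda>w. card {x\<in>V. x < w}"
  have inj: "inj_on ?r V"
  proof (rule inj_onI)
    fix u w assume "u \<in> V" "w \<in> V" "?r u = ?r w"
    then show "u = w" using rank_mono2[OF assms, of w u] rank_mono2[OF assms, of u w]
      by (metis less_irrefl linorder_neqE)
  qed
  have sub: "?r ` V \<subseteq> {0..<card V}"
  proof
    fix n assume "n \<in> ?r ` V"
    then obtain w where w: "w \<in> V" "n = ?r w" by auto
    have "{x\<in>V. x < w} \<subset> V" using w by auto
    then have "?r w < card V" using assms by (simp add: psubset_card_mono)
    then show "n \<in> {0..<card V}" using w by simp
  qed
  have "card (?r ` V) = card {0..<card V}" using inj by (simp add: card_image)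
  then have "?r ` V = {0..<card V}" using sub by (simp add: card_subset_eq)
  then show ?thesis using inj by (simp add: bij_betw_def)
qed

lemma app_less_iff: "(p @ u < p @ v) \<longleftrightarrow> (u::nat list) < v"
  by (induction p) auto

lemma app_le_iff: "(p @ u \<le> p @ v) \<longleftrightarrow> (u::nat list) \<le> v"
  unfolding list_le_def using app_less_iff by auto

lemma prefix_less: "p < p @ (x # r)"
  by (induction p) auto

lemma between_spoke: "(a::nat list) < c \<Longrightarrow> c < a @ [i] \<Longrightarrow> \<exists>j r. j < i \<and> c = a @ (j # r)"
proof (induction a arbitrary: c)
  case Nil
  then obtain j r where "c = j # r" by (cases c) auto
  then show ?case using Nil by auto
next
  case (Cons x a)
  then obtain y c' where c: "c = y # c'" by (cases c) auto
  have "y = x" using Cons.prems c by auto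
  then have "a < c'" "c' < a @ [i]" using Cons.prems c by auto
  then show ?case using Cons.IH c \<open>y = x\<close> by auto
qed

lemma between_rim: "(p @ [i]::nat list) < c \<Longrightarrow> c < p @ [Suc i] \<Longrightarrow> \<exists>x r. c = p @ (i # x # r)"
proof (induction p arbitrary: c)
  case Nil
  then obtain y r where c: "c = y # r" by (cases c) auto
  then have "y = i" using Nil by auto
  then show ?case using Nil c by (cases r) auto
next
  case (Cons x a)
  then obtain y c' where c: "c = y # c'" by (cases c) auto
  have "y = x" using Cons.prems c by auto
  then show ?case using Cons c by auto
qed

lemma snoc_split: "q @ [m] = a @ (j # r) \<Longrightarrow> (r = [] \<and> q = a \<and> m = j) \<or> (\<exists>r'. r = r' @ [m] \<and> q = a @ (j # r'))"
  by (cases r rule: rev_exhaust) auto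

definition GV :: "nat \<Rightarrow> nat list set" where
  "GV k = {w. set w \<subseteq> {..<14} \<and> length w \<le> k}"

definition tedge :: "nat list \<Rightarrow> nat list \<Rightarrow> bool" where
  "tedge v w \<longleftrightarrow> (\<exists>i<14. w = v @ [i]) \<or> (\<exists>p i. Suc i < 14 \<and> v = p @ [i] \<and> w = p @ [Suc i])"

lemma tedge_less: "tedge v w \<Longrightarrow> v < w"
  unfolding tedge_def using prefix_less app_less_iff by auto

lemma no_cross_lex:
  assumes "tedge a b" "tedge c d" "a < c" "c < b"
  shows "d \<le> b"
  using assms(1)
  unfolding tedge_def
proof (elim disjE exE conjE)
  fix i assume i: "i < 14" "b = a @ [i]"
  obtain j r where jr: "j < i" "c = a @ (j # r)" using between_spoke assms(3,4) i by blast
  show "d \<le> b" using assms(2) unfolding tedge_def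
  proof (elim disjE exE conjE)
    fix k assume "d = c @ [k]"
    then show ?thesis using jr i by (auto simp add: list_le_def app_less_iff)
  next
    fix q m assume qm: "c = q @ [m]" "d = q @ [Suc m]"
    have "q @ [m] = a @ (j # r)" using qm jr by simp
    from snoc_split[OF this] show ?thesis
    proof (elim disjE exE conjE)
      assume "r = []" "q = a" "m = j"
      then show ?thesis using qm i jr by (auto simp add: list_le_def app_less_iff)
    next
      fix r' assume "q = a @ j # r'"
      then show ?thesis using qm i jr by (auto simp add: list_le_def app_less_iff)
    qed
  qed
next
  fix p i assume pi: "Suc i < 14" "a = p @ [i]" "b = p @ [Suc i]"
  obtain x r where xr: "c = p @ (i # x # r)" using between_rim assms(3,4) pi by blast
  show "d \<le> b" using assms(2) unfolding tedge_def
  proof (elim disjE exE conjE)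
    fix k assume "d = c @ [k]"
    then show ?thesis using xr pi by (auto simp add: list_le_def app_less_iff)
  next
    fix q m assume qm: "c = q @ [m]" "d = q @ [Suc m]"
    have "q @ [m] = (p @ [i]) @ (x # r)" using qm xr by simp
    from snoc_split[OF this] show ?thesis
    proof (elim disjE exE conjE)
      assume "r = []" "q = p @ [i]" "m = x"
      then show ?thesis using qm pi by (auto simp add: list_le_def app_less_iff)
    next
      fix r' assume "r = r' @ [m]" "q = (p @ [i]) @ x # r'"
      then show ?thesis using qm pi by (auto simp add: list_le_def app_less_iff)
    qed
  qed
qed

definition negs :: "nat list \<Rightarrow> nat list \<Rightarrow> bool" where
  "negs v w \<longleftrightarrow> (if length v = length w then odd (min (last v) (last w))
      else 7 \<le> last (if length v < length w then w else v))"

definition GE :: "nat \<Rightarrow> nat list \<Rightarrow> nat list \<Rightarrow> bool" where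
  "GE k v w \<longleftrightarrow> v \<in> GV k \<and> w \<in> GV k \<and> (tedge v w \<or> tedge w v)"

definition GN :: "nat \<Rightarrow> nat list \<Rightarrow> nat list \<Rightarrow> bool" where
  "GN k v w \<longleftrightarrow> GE k v w \<and> negs v w"

lemma finite_GV: "finite (GV k)"
  unfolding GV_def using finite_lists_length_le[of "{..<14::nat}" k] by simp

lemma tedge_irrefl: "\<not> tedge v v"
  unfolding tedge_def by auto

lemma GV_root: "[] \<in> GV k"
  unfolding GV_def by simp

lemma negs_sym: "negs v w = negs w v"
proof (cases "length v = length w")
  case True
  then show ?thesis unfolding negs_def by (simp add: min.commute)
next
  case False
  then show ?thesis unfolding negs_def by (cases "length v < length w") auto
qed

lemma gadget_sg: "signified_graph (GV k) (GE k) (GN k)"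
  unfolding signified_graph_def
proof (intro conjI allI impI)
  show "finite (GV k)" by (rule finite_GV)
  fix x y
  show "GE k x y \<Longrightarrow> x \<in> GV k" "GE k x y \<Longrightarrow> y \<in> GV k" by (simp_all add: GE_def)
  show "GE k x y \<Longrightarrow> GE k y x" by (auto simp: GE_def)
  show "GN k x y \<Longrightarrow> GE k x y" by (simp add: GN_def)
  show "GN k x y \<Longrightarrow> GN k y x" by (auto simp: GN_def GE_def negs_sym)
next
  fix x show "\<not> GE k x x" by (simp add: GE_def tedge_irrefl)
qed

lemma gadget_op: "outerplanar (GV k) (GE k)"
proof -
  let ?r = "\<lambda>w. card {x\<in>GV k. x < w}"
  have "bij_betw ?r (GV k) {0..<card (GV k)}" using rank_bij[OF finite_GV] .
  moreover have "\<not> (?r a < ?r c \<and> ?r c < ?r b \<and> ?r b < ?r d)"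
    if "a \<in> GV k" "b \<in> GV k" "c \<in> GV k" "d \<in> GV k" "GE k a b" "GE k c d" for a b c d
  proof
    assume *: "?r a < ?r c \<and> ?r c < ?r b \<and> ?r b < ?r d"
    then have ac: "a < c" and cb: "c < b" and bd: "b < d"
      using rank_iff[OF finite_GV] that by blast+
    have tab: "tedge a b" using that(5) ac cb tedge_less unfolding GE_def
      by (meson dual_order.strict_trans less_asym)
    have tcd: "tedge c d" using that(6) cb bd tedge_less unfolding GE_def
      by (meson dual_order.strict_trans less_asym)
    have "d \<le> b" using no_cross_lex[OF tab tcd ac cb] .
    then show False using bd by simp
  qed
  ultimately show ?thesis unfolding outerplanar_def by blast
qed

lemma negs_shift: "tedge v w \<Longrightarrow> negs (u @ v) (u @ w) = negs v w"
  unfolding tedge_def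
proof (elim disjE exE conjE)
  fix i assume "w = v @ [i]"
  then show ?thesis unfolding negs_def by simp
next
  fix p i assume "v = p @ [i]" "w = p @ [Suc i]"
  then show ?thesis unfolding negs_def by simp
qed

lemma tedge_shift: assumes "tedge v w" shows "tedge (u @ v) (u @ w)"
proof -
  consider (s) i where "i<14" "w = v@[i]" | (r) p i where "Suc i < 14" "v = p@[i]" "w = p@[Suc i]"
    using assms unfolding tedge_def by blast
  then show ?thesis
  proof cases
    case (s i) then show ?thesis unfolding tedge_def by auto
  next
    case (r p i) then show ?thesis unfolding tedge_def by (intro disjI2 exI[of _ "u @ p"] exI[of _ i]) simp
  qed
qed

definition Aset :: "'b set \<Rightarrow> ('b \<Rightarrow> 'b \<Rightarrow> bool) \<Rightarrow> ('b \<Rightarrow> 'b \<Rightarrow> bool) \<Rightarrow> nat \<Rightarrow> 'b set" where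
  "Aset VH EH NH k = {x. \<exists>g. signified_hom (GV k) (GE k) (GN k) VH EH NH g \<and> g [] = x}"

lemma A_sub: "Aset VH EH NH k \<subseteq> VH"
  unfolding Aset_def signified_hom_def using GV_root by auto

lemma A_ne:
  assumes H: "\<forall>(V::nat set) E N. signified_graph V E N \<and> outerplanar V E \<longrightarrow>
           (\<exists>g. signified_hom V E N VH EH NH g)"
  shows "Aset VH EH NH k \<noteq> {}"
  using transfer_nat[OF H gadget_sg gadget_op, of k] unfolding Aset_def by auto

lemma GV_mono: "GV k \<subseteq> GV (Suc k)"
  unfolding GV_def by auto

lemma A_mono: "Aset VH EH NH (Suc k) \<subseteq> Aset VH EH NH k"
proof
  fix x assume "x \<in> Aset VH EH NH (Suc k)"
  then obtain g where g: "signified_hom (GV (Suc k)) (GE (Suc k)) (GN (Suc k)) VH EH NH g" "g [] = x"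
    unfolding Aset_def by auto
  have "signified_hom (GV k) (GE k) (GN k) VH EH NH g"
    using g(1) GV_mono[of k] unfolding signified_hom_def GN_def GE_def by blast
  then show "x \<in> Aset VH EH NH k" using g(2) unfolding Aset_def by auto
qed

lemma Cons_GV: "i < 14 \<Longrightarrow> w \<in> GV k \<Longrightarrow> i # w \<in> GV (Suc k)"
  unfolding GV_def by auto

lemma A_step:
  assumes "x \<in> Aset VH EH NH (Suc k)"
  shows "\<exists>y. \<forall>i<14. y i \<in> Aset VH EH NH k \<and> EH x (y i) \<and> (NH x (y i) \<longleftrightarrow> 7 \<le> i) \<and>
           (Suc i < 14 \<longrightarrow> EH (y i) (y (Suc i)) \<and> (NH (y i) (y (Suc i)) \<longleftrightarrow> odd i))"
proof -
  obtain g where g: "signified_hom (GV (Suc k)) (GE (Suc k)) (GN (Suc k)) VH EH NH g" "g [] = x"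
    using assms unfolding Aset_def by auto
  have gE: "EH (g a) (g b) \<and> (NH (g a) (g b) \<longleftrightarrow> GN (Suc k) a b)" if "GE (Suc k) a b" for a b
    using g(1) that unfolding signified_hom_def by blast
  have gV: "g a \<in> VH" if "a \<in> GV (Suc k)" for a
    using g(1) that unfolding signified_hom_def by blast
  have sub: "g [i] \<in> Aset VH EH NH k" if "i < 14" for i
  proof -
    let ?h = "\<lambda>w. g (i # w)"
    have "signified_hom (GV k) (GE k) (GN k) VH EH NH ?h"
      unfolding signified_hom_def
    proof (intro conjI ballI allI impI)
      fix w assume "w \<in> GV k" then show "?h w \<in> VH" using gV Cons_GV that by blast
    next
      fix v w assume vw: "GE k v w"
      have e: "GE (Suc k) ([i] @ v) ([i] @ w)"
        using vw Cons_GV[OF that] tedge_shift[of v w "[i]"] tedge_shift[of w v "[i]"]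
        unfolding GE_def by auto
      have n: "negs ([i] @ v) ([i] @ w) = negs v w"
        using vw negs_shift[of v w "[i]"] negs_shift[of w v "[i]"] negs_sym unfolding GE_def by metis
      show "EH (?h v) (?h w)" using gE[OF e] by simp
      show "NH (?h v) (?h w) \<longleftrightarrow> GN k v w"
        using gE[OF e] e n vw unfolding GN_def by simp
    qed
    then show ?thesis unfolding Aset_def by auto
  qed
  have spoke: "GE (Suc k) [] [i]" "GN (Suc k) [] [i] \<longleftrightarrow> 7 \<le> i" if "i < 14" for i
  proof -
    have "tedge [] [i]" unfolding tedge_def using that by simp
    then show "GE (Suc k) [] [i]" using that unfolding GE_def GV_def by auto
    then show "GN (Suc k) [] [i] \<longleftrightarrow> 7 \<le> i" unfolding GN_def negs_def by simp
  qed
  have rim: "GE (Suc k) [i] [Suc i]" "GN (Suc k) [i] [Suc i] \<longleftrightarrow> odd i" if "Suc i < 14" for i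
  proof -
    have "tedge [i] [Suc i]" unfolding tedge_def using that
      by (intro disjI2 exI[of _ "[]"] exI[of _ i]) simp
    then show "GE (Suc k) [i] [Suc i]" using that unfolding GE_def GV_def by auto
    then show "GN (Suc k) [i] [Suc i] \<longleftrightarrow> odd i" unfolding GN_def negs_def by simp
  qed
  show ?thesis
  proof (rule exI[of _ "\<lambda>i. g [i]"], intro allI impI conjI)
    fix i :: nat assume i: "i < 14"
    show "g [i] \<in> Aset VH EH NH k" using sub[OF i] .
    show "EH x (g [i])" using gE[OF spoke(1)[OF i]] g(2) by simp
    show "NH x (g [i]) \<longleftrightarrow> 7 \<le> i" using gE[OF spoke(1)[OF i]] spoke(2)[OF i] g(2) by simp
    assume i1: "Suc i < 14"
    show "EH (g [i]) (g [Suc i])" using gE[OF rim(1)[OF i1]] by simp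
    show "NH (g [i]) (g [Suc i]) \<longleftrightarrow> odd i" using gE[OF rim(1)[OF i1]] rim(2)[OF i1] by simp
  qed
qed


lemma stab:
  assumes fin: "finite VH"
  shows "\<exists>k. Aset VH EH NH (Suc k) = Aset VH EH NH k"
proof (rule ccontr)
  assume nt: "\<not> ?thesis"
  have ne: "Aset VH EH NH (Suc k) \<noteq> Aset VH EH NH k" for k using nt by blast
  have ps: "Aset VH EH NH (Suc k) \<subset> Aset VH EH NH k" for k
    using A_mono[of VH EH NH k] ne[of k] by (simp add: psubset_eq)
  have finA: "finite (Aset VH EH NH k)" for k by (rule finite_subset[OF A_sub fin])
  have bound: "card (Aset VH EH NH k) + k \<le> card VH" for k
  proof (induction k)
    case 0 then show ?case using card_mono[OF fin A_sub] by simp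
  next
    case (Suc k)
    have "card (Aset VH EH NH (Suc k)) < card (Aset VH EH NH k)"
      by (rule psubset_card_mono[OF finA ps])
    then show ?case using Suc by simp
  qed
  show False using bound[of "Suc (card VH)"] by simp
qed

lemma card4:
  assumes "finite S" "distinct [a,b,c,d]" "{a,b,c,d} \<subseteq> S"
  shows "4 \<le> card S"
proof -
  have "card {a,b,c,d} = 4" using assms(2) by simp
  then show ?thesis using card_mono[OF assms(1,3)] by simp
qed

lemma walk4:
  fixes E N :: "'b \<Rightarrow> 'b \<Rightarrow> bool"
  assumes Nsym: "\<And>x y. N x y \<Longrightarrow> N y x" and irr: "\<And>x. \<not> E x x"
    and e: "E y0 y1" "E y1 y2" "E y2 y3" "E y3 y4"
    and s: "N y0 y1 \<noteq> N y1 y2" "N y1 y2 \<noteq> N y2 y3" "N y2 y3 \<noteq> N y3 y4"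
    and S: "finite S" "{y0,y1,y2,y3,y4} \<subseteq> S"
  shows "4 \<le> card S"
proof -
  have Nsym': "N x y = N y x" for x y using Nsym by blast
  have d12: "y1 \<noteq> y2" "y2 \<noteq> y3" "y0 \<noteq> y1" "y3 \<noteq> y4" using e irr by metis+
  have d13: "y1 \<noteq> y3" using s(2) Nsym' by metis
  show ?thesis
  proof (cases "y0 \<in> {y1,y2,y3}")
    case False
    then show ?thesis using card4[OF S(1), of y0 y1 y2 y3] d12 d13 S(2) by auto
  next
    case True
    have "y0 \<noteq> y2" using s(1) Nsym' by metis
    then have y03: "y0 = y3" using True d12 by auto
    have "y4 \<noteq> y2" using s(3) Nsym' by metis
    moreover have "y4 \<noteq> y1" using s y03 Nsym' by metis
    ultimately show ?thesis using card4[OF S(1), of y4 y1 y2 y3] d12 d13 S(2) by auto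
  qed
qed

lemma closure7:
  fixes E N :: "'b \<Rightarrow> 'b \<Rightarrow> bool"
  assumes Nsym: "\<And>x y. N x y \<Longrightarrow> N y x" and Esym: "\<And>x y. E x y \<Longrightarrow> E y x"
    and irr: "\<And>x. \<not> E x x"
    and S: "finite S" "card S = 4"
    and w: "\<And>i. i \<le> 6 \<Longrightarrow> w i \<in> S"
    and we: "\<And>i. i < 6 \<Longrightarrow> E (w i) (w (Suc i))"
    and ws: "\<And>i. i < 5 \<Longrightarrow> N (w i) (w (Suc i)) \<noteq> N (w (Suc i)) (w (Suc (Suc i)))"
    and q: "q \<in> S"
  shows "\<exists>z\<in>S. E q z \<and> (N q z \<longleftrightarrow> c)"
proof (rule ccontr)
  assume nq: "\<not> ?thesis"
  have Nsym': "N x y = N y x" for x y using Nsym by blast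
  have good: "\<exists>z\<in>S. E (w (Suc i)) z \<and> (N (w (Suc i)) z \<longleftrightarrow> c)" if "i < 5" for i
  proof (cases "N (w i) (w (Suc i)) \<longleftrightarrow> c")
    case True
    then show ?thesis using w[of i] that we[of i] Esym Nsym' by (intro bexI[of _ "w i"]) auto
  next
    case False
    then show ?thesis using w[of "Suc (Suc i)"] that we[of "Suc i"] ws[of i]
      by (intro bexI[of _ "w (Suc (Suc i))"]) auto
  qed
  have ne: "w (Suc i) \<noteq> q" if "i < 5" for i using good[OF that] nq by auto
  have "4 \<le> card (S - {q})"
  proof (rule walk4[of N E "w 1" "w 2" "w 3" "w 4" "w 5"])
    show "N x y \<Longrightarrow> N y x" for x y using Nsym .
    show "\<not> E x x" for x using irr .
    show "E (w 1) (w 2)" "E (w 2) (w 3)" "E (w 3) (w 4)" "E (w 4) (w 5)"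
      using we[of 1] we[of 2] we[of 3] we[of 4] by (simp_all add: numeral_eq_Suc)
    show "N (w 1) (w 2) \<noteq> N (w 2) (w 3)" "N (w 2) (w 3) \<noteq> N (w 3) (w 4)" "N (w 3) (w 4) \<noteq> N (w 4) (w 5)"
      using ws[of 1] ws[of 2] ws[of 3] by (simp_all add: numeral_eq_Suc)
    show "finite (S - {q})" using S by simp
    show "{w 1, w 2, w 3, w 4, w 5} \<subseteq> S - {q}"
      using w[of 1] w[of 2] w[of 3] w[of 4] w[of 5] ne[of 0] ne[of 1] ne[of 2] ne[of 3] ne[of 4]
      by (simp add: numeral_eq_Suc)
  qed
  then show False using S q by simp
qed

lemma phase12:
  fixes V :: "'b set" and E N :: "'b \<Rightarrow> 'b \<Rightarrow> bool"
  assumes sg: "signified_graph V E N" and c9: "card V = 9" and AV: "A \<subseteq> V" "A \<noteq> {}"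
    and step: "\<And>x. x \<in> A \<Longrightarrow> \<exists>y. \<forall>i<14. y i \<in> A \<and> E x (y i) \<and> (N x (y i) \<longleftrightarrow> 7 \<le> i) \<and>
           (Suc i < 14 \<longrightarrow> E (y i) (y (Suc i)) \<and> (N (y i) (y (Suc i)) \<longleftrightarrow> odd i))"
  shows "\<forall>x\<in>V. \<forall>y\<in>V. x \<noteq> y \<longrightarrow> E x y"
    and "\<forall>x\<in>V. card {y. E x y \<and> \<not> N x y} = 4 \<and> card {y. N x y} = 4"
    and "\<forall>x\<in>V. \<forall>q. E x q \<and> \<not> N x q \<longrightarrow> (\<forall>c. \<exists>z. E x z \<and> \<not> N x z \<and> E q z \<and> (N q z \<longleftrightarrow> c))"
    and "\<forall>x\<in>V. \<forall>q. N x q \<longrightarrow> (\<forall>c. \<exists>z. N x z \<and> E q z \<and> (N q z \<longleftrightarrow> c))"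
proof -
  have fin: "finite V" and EV: "\<And>x y. E x y \<Longrightarrow> x \<in> V \<and> y \<in> V" and irr: "\<And>x. \<not> E x x"
    and Esym: "\<And>x y. E x y \<Longrightarrow> E y x" and NE: "\<And>x y. N x y \<Longrightarrow> E x y"
    and Nsym: "\<And>x y. N x y \<Longrightarrow> N y x"
    using sg unfolding signified_graph_def by blast+
  define Pos where "Pos x = {z. E x z \<and> \<not> N x z}" for x
  define Neg where "Neg x = {z. N x z}" for x
  have PosV: "Pos x \<subseteq> V" for x unfolding Pos_def using EV by auto
  have NegV: "Neg x \<subseteq> V" for x unfolding Neg_def using EV NE by blast
  have finPos: "finite (Pos x)" for x using PosV fin finite_subset by blast
  have finNeg: "finite (Neg x)" for x using NegV fin finite_subset by blast
  have finA: "finite A" using AV fin finite_subset by blast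
  have xPos: "x \<notin> Pos x" for x unfolding Pos_def using irr by auto
  have xNeg: "x \<notin> Neg x" for x unfolding Neg_def using irr NE by auto
  have PN: "Pos x \<inter> Neg x = {}" for x unfolding Pos_def Neg_def by auto
    have walks: "4 \<le> card (Pos x \<inter> A) \<and> 4 \<le> card (Neg x \<inter> A)" if xA: "x \<in> A" for x
  proof -
    obtain y where Y: "\<forall>i<14. y i \<in> A \<and> E x (y i) \<and> (N x (y i) \<longleftrightarrow> 7 \<le> i) \<and>
           (Suc i < 14 \<longrightarrow> E (y i) (y (Suc i)) \<and> (N (y i) (y (Suc i)) \<longleftrightarrow> odd i))"
      using step[OF xA] by blast
    have Y1: "y i \<in> A" "E x (y i)" "N x (y i) \<longleftrightarrow> 7 \<le> i" if "i < 14" for i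
      using Y that by blast+
    have Y2: "E (y i) (y (Suc i))" "N (y i) (y (Suc i)) \<longleftrightarrow> odd i" if "Suc i < 14" for i
      using Y that by auto
    have "4 \<le> card (Pos x \<inter> A)"
    proof (rule walk4[of N E "y 0" "y 1" "y 2" "y 3" "y 4"])
      show "N a b \<Longrightarrow> N b a" for a b using Nsym .
      show "\<not> E a a" for a using irr .
      show "E (y 0) (y 1)" "E (y 1) (y 2)" "E (y 2) (y 3)" "E (y 3) (y 4)"
        using Y2(1)[of 0] Y2(1)[of 1] Y2(1)[of 2] Y2(1)[of 3] by (simp_all add: numeral_eq_Suc)
      show "N (y 0) (y 1) \<noteq> N (y 1) (y 2)" "N (y 1) (y 2) \<noteq> N (y 2) (y 3)" "N (y 2) (y 3) \<noteq> N (y 3) (y 4)"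
        using Y2(2)[of 0, simplified] Y2(2)[of 1, simplified] Y2(2)[of 2, simplified] Y2(2)[of 3, simplified] by (simp_all add: numeral_eq_Suc)
      show "finite (Pos x \<inter> A)" using finA by simp
      show "{y 0, y 1, y 2, y 3, y 4} \<subseteq> Pos x \<inter> A"
        using Y1[of 0] Y1[of 1] Y1[of 2] Y1[of 3] Y1[of 4] unfolding Pos_def by auto
    qed
    moreover have "4 \<le> card (Neg x \<inter> A)"
    proof (rule walk4[of N E "y 7" "y 8" "y 9" "y 10" "y 11"])
      show "N a b \<Longrightarrow> N b a" for a b using Nsym .
      show "\<not> E a a" for a using irr .
      show "E (y 7) (y 8)" "E (y 8) (y 9)" "E (y 9) (y 10)" "E (y 10) (y 11)"
        using Y2(1)[of 7] Y2(1)[of 8] Y2(1)[of 9] Y2(1)[of 10] by (simp_all add: numeral_eq_Suc)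
      show "N (y 7) (y 8) \<noteq> N (y 8) (y 9)" "N (y 8) (y 9) \<noteq> N (y 9) (y 10)" "N (y 9) (y 10) \<noteq> N (y 10) (y 11)"
        using Y2(2)[of 7, simplified] Y2(2)[of 8, simplified] Y2(2)[of 9, simplified] Y2(2)[of 10, simplified] by (simp_all add: numeral_eq_Suc)
      show "finite (Neg x \<inter> A)" using finA by simp
      show "{y 7, y 8, y 9, y 10, y 11} \<subseteq> Neg x \<inter> A"
        using Y1[of 7] Y1[of 8] Y1[of 9] Y1[of 10] Y1[of 11] unfolding Neg_def by auto
    qed
    ultimately show ?thesis by blast
  qed
    obtain x0 where x0: "x0 \<in> A" using AV by blast
  have "9 \<le> card A"
  proof -
    have sub: "insert x0 ((Pos x0 \<inter> A) \<union> (Neg x0 \<inter> A)) \<subseteq> A" using x0 by auto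
    have "card (insert x0 ((Pos x0 \<inter> A) \<union> (Neg x0 \<inter> A))) = Suc (card (Pos x0 \<inter> A) + card (Neg x0 \<inter> A))"
      using finPos finNeg xPos xNeg PN
      by (simp add: card_Un_disjoint disjoint_iff)
    then show ?thesis using walks[OF x0] card_mono[OF finA sub] by simp
  qed
  moreover have "card A \<le> card V" using card_mono[OF fin AV(1)] .
  ultimately have "card A = card V" using c9 by simp
  then have AeqV: "A = V" using card_subset_eq[OF fin AV(1)] by simp
  have cards: "card (Pos x) = 4 \<and> card (Neg x) = 4 \<and> insert x (Pos x \<union> Neg x) = V" if xV: "x \<in> V" for x
  proof -
    have xA: "x \<in> A" using xV AeqV by simp
    have p4: "4 \<le> card (Pos x)"
      using walks[OF xA] card_mono[OF finPos[of x] Int_lower1[of "Pos x" A]] by linarith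
    have n4: "4 \<le> card (Neg x)"
      using walks[OF xA] card_mono[OF finNeg[of x] Int_lower1[of "Neg x" A]] by linarith
    have sub: "insert x (Pos x \<union> Neg x) \<subseteq> V" using xV PosV NegV by auto
    have cu: "card (insert x (Pos x \<union> Neg x)) = Suc (card (Pos x) + card (Neg x))"
      using finPos finNeg xPos xNeg PN
      by (simp add: card_Un_disjoint disjoint_iff)
    have le9: "card (insert x (Pos x \<union> Neg x)) \<le> 9" using card_mono[OF fin sub] c9 by simp
    have "card (Pos x) = 4" "card (Neg x) = 4" using p4 n4 cu le9 by linarith+
    moreover have "card (insert x (Pos x \<union> Neg x)) = card V" using cu c9 calculation by simp
    then have "insert x (Pos x \<union> Neg x) = V" using card_subset_eq[OF fin sub] by simp
    ultimately show ?thesis by simp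
  qed
  show "\<forall>x\<in>V. \<forall>y\<in>V. x \<noteq> y \<longrightarrow> E x y"
  proof (intro ballI impI)
    fix x y assume "x \<in> V" "y \<in> V" "x \<noteq> y"
    then have "y \<in> Pos x \<union> Neg x" using cards[of x] by auto
    then show "E x y" unfolding Pos_def Neg_def using NE by auto
  qed
  show "\<forall>x\<in>V. card {y. E x y \<and> \<not> N x y} = 4 \<and> card {y. N x y} = 4"
    using cards unfolding Pos_def Neg_def by blast
  show "\<forall>x\<in>V. \<forall>q. E x q \<and> \<not> N x q \<longrightarrow> (\<forall>c. \<exists>z. E x z \<and> \<not> N x z \<and> E q z \<and> (N q z \<longleftrightarrow> c))"
  proof (intro ballI allI impI)
    fix x q c assume xV: "x \<in> V" and q: "E x q \<and> \<not> N x q"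
    obtain y where Y: "\<forall>i<14. y i \<in> A \<and> E x (y i) \<and> (N x (y i) \<longleftrightarrow> 7 \<le> i) \<and>
           (Suc i < 14 \<longrightarrow> E (y i) (y (Suc i)) \<and> (N (y i) (y (Suc i)) \<longleftrightarrow> odd i))"
      using step xV AeqV by blast
    have "\<exists>z\<in>Pos x. E q z \<and> (N q z \<longleftrightarrow> c)"
    proof (rule closure7[of N E "Pos x" y])
      show "N a b \<Longrightarrow> N b a" for a b using Nsym .
      show "E a b \<Longrightarrow> E b a" for a b using Esym .
      show "\<not> E a a" for a using irr .
      show "finite (Pos x)" "card (Pos x) = 4" using finPos cards xV by auto
      show "y i \<in> Pos x" if "i \<le> 6" for i using Y that unfolding Pos_def by auto
      show "E (y i) (y (Suc i))" if "i < 6" for i using Y that by auto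
      show "N (y i) (y (Suc i)) \<noteq> N (y (Suc i)) (y (Suc (Suc i)))" if "i < 5" for i using Y that by auto
      show "q \<in> Pos x" using q unfolding Pos_def by auto
    qed
    then show "\<exists>z. E x z \<and> \<not> N x z \<and> E q z \<and> (N q z \<longleftrightarrow> c)" unfolding Pos_def by auto
  qed
  show "\<forall>x\<in>V. \<forall>q. N x q \<longrightarrow> (\<forall>c. \<exists>z. N x z \<and> E q z \<and> (N q z \<longleftrightarrow> c))"
  proof (intro ballI allI impI)
    fix x q c assume xV: "x \<in> V" and q: "N x q"
    obtain y where Y: "\<forall>i<14. y i \<in> A \<and> E x (y i) \<and> (N x (y i) \<longleftrightarrow> 7 \<le> i) \<and>
           (Suc i < 14 \<longrightarrow> E (y i) (y (Suc i)) \<and> (N (y i) (y (Suc i)) \<longleftrightarrow> odd i))"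
      using step xV AeqV by blast
    have "\<exists>z\<in>Neg x. E q z \<and> (N q z \<longleftrightarrow> c)"
    proof (rule closure7[of N E "Neg x" "\<lambda>i. y (i + 7)"])
      show "N a b \<Longrightarrow> N b a" for a b using Nsym .
      show "E a b \<Longrightarrow> E b a" for a b using Esym .
      show "\<not> E a a" for a using irr .
      show "finite (Neg x)" "card (Neg x) = 4" using finNeg cards xV by auto
      show "y (i + 7) \<in> Neg x" if "i \<le> 6" for i using Y that unfolding Neg_def by auto
      show "E (y (i + 7)) (y (Suc i + 7))" if "i < 6" for i
      proof -
        have "i + 7 < 14" "Suc (i + 7) < 14" using that by auto
        then have "E (y (i + 7)) (y (Suc (i + 7)))" using Y by blast
        then show ?thesis by (simp only: add_Suc)
      qed
      show "N (y (i + 7)) (y (Suc i + 7)) \<noteq> N (y (Suc i + 7)) (y (Suc (Suc i) + 7))" if "i < 5" for i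
      proof -
        have b: "i + 7 < 14" "Suc (i + 7) < 14" "Suc (Suc (i + 7)) < 14" using that by auto
        have a1: "N (y (i + 7)) (y (Suc (i + 7))) = odd (i + 7)" using Y b by blast
        have a2: "N (y (Suc (i + 7))) (y (Suc (Suc (i + 7)))) = odd (Suc (i + 7))" using Y b by blast
        show ?thesis unfolding add_Suc using a1 a2 by simp
      qed
      show "q \<in> Neg x" using q unfolding Neg_def by auto
    qed
    then show "\<exists>z. N x z \<and> E q z \<and> (N q z \<longleftrightarrow> c)" unfolding Neg_def by auto
  qed
qed

locale sg9 =
  fixes V :: "'b set" and E N :: "'b \<Rightarrow> 'b \<Rightarrow> bool"
  assumes fin: "finite V" and c9: "card V = 9"
    and EV: "\<And>x y. E x y \<Longrightarrow> x \<in> V \<and> y \<in> V" and irr: "\<And>x. \<not> E x x"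
    and Esym: "\<And>x y. E x y \<Longrightarrow> E y x"
    and NE: "\<And>x y. N x y \<Longrightarrow> E x y" and Nsym: "\<And>x y. N x y \<Longrightarrow> N y x"
    and comp: "\<And>x y. x \<in> V \<Longrightarrow> y \<in> V \<Longrightarrow> x \<noteq> y \<Longrightarrow> E x y"
    and c4: "\<And>x. x \<in> V \<Longrightarrow> card {y. E x y \<and> \<not> N x y} = 4 \<and> card {y. N x y} = 4"
    and clP: "\<And>x q c. x \<in> V \<Longrightarrow> E x q \<and> \<not> N x q \<Longrightarrow> \<exists>z. E x z \<and> \<not> N x z \<and> E q z \<and> (N q z \<longleftrightarrow> c)"
    and clN: "\<And>x q c. x \<in> V \<Longrightarrow> N x q \<Longrightarrow> \<exists>z. N x z \<and> E q z \<and> (N q z \<longleftrightarrow> c)"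

context sg9
begin

abbreviation P where "P x y \<equiv> E x y \<and> \<not> N x y"
abbreviation Pos where "Pos x \<equiv> {y. P x y}"
abbreviation Ng where "Ng x \<equiv> {y. N x y}"

lemma Psym: "P x y \<Longrightarrow> P y x" using Esym Nsym by blast
lemma Pirr: "\<not> P x x" using irr by blast
lemma Nirr: "\<not> N x x" using irr NE by blast
lemma PosV: "Pos x \<subseteq> V" using EV by blast
lemma NgV: "Ng x \<subseteq> V" using EV NE by blast
lemma finPos: "finite (Pos x)" using PosV fin finite_subset by blast
lemma finNg: "finite (Ng x)" using NgV fin finite_subset by blast
lemma PorN: "x \<in> V \<Longrightarrow> y \<in> V \<Longrightarrow> x \<noteq> y \<Longrightarrow> \<not> P x y \<Longrightarrow> N x y" using comp by blast
lemma Vsplit: "x \<in> V \<Longrightarrow> V = insert x (Pos x \<union> Ng x)"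
  using PosV NgV comp by blast

lemma D1:
  assumes xV: "x \<in> V" and q: "q \<in> Pos x"
  shows "card (Pos x \<inter> Pos q) = 1"
proof -
  let ?S = "Pos x" and ?M = "Ng x"
  define dS where "dS u = card (Pos u \<inter> ?S)" for u
  define X where "X u = card (Pos u \<inter> ?M)" for u
  have finS: "finite ?S" and finM: "finite ?M" using finPos finNg by auto
  have cS: "card ?S = 4" and cM: "card ?M = 4" using c4[OF xV] by auto
  have SM: "?S \<inter> ?M = {}" by blast
  have xS: "x \<notin> ?S" "x \<notin> ?M" using Pirr Nirr by auto
  have eqS: "dS u + X u = 3" if u: "u \<in> ?S" for u
  proof -
    have uV: "u \<in> V" using u PosV by blast
    have eq: "Pos u = insert x ((Pos u \<inter> ?S) \<union> (Pos u \<inter> ?M))"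
      using Vsplit[OF xV] PosV[of u] u Psym by blast
    have c: "card (insert x ((Pos u \<inter> ?S) \<union> (Pos u \<inter> ?M))) = Suc (card (Pos u \<inter> ?S) + card (Pos u \<inter> ?M))"
    proof -
      have "card ((Pos u \<inter> ?S) \<union> (Pos u \<inter> ?M)) = card (Pos u \<inter> ?S) + card (Pos u \<inter> ?M)"
        by (rule card_Un_disjoint) (use finS finM SM in auto)
      moreover have "x \<notin> (Pos u \<inter> ?S) \<union> (Pos u \<inter> ?M)" using xS by blast
      ultimately show ?thesis using finS finM by simp
    qed
    have "card (Pos u) = Suc (dS u + X u)"
      unfolding dS_def X_def using eq c by metis
    then show ?thesis using c4[OF uV] by simp
  qed
  have eqM: "dS m + X m = 4" if m: "m \<in> ?M" for m
  proof -
    have mV: "m \<in> V" using m NgV by blast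
    have "x \<notin> Pos m" using m Nsym by blast
    then have eq: "Pos m = (Pos m \<inter> ?S) \<union> (Pos m \<inter> ?M)"
      using Vsplit[OF xV] PosV[of m] by blast
    have c: "card ((Pos m \<inter> ?S) \<union> (Pos m \<inter> ?M)) = card (Pos m \<inter> ?S) + card (Pos m \<inter> ?M)"
      by (rule card_Un_disjoint) (use finS finM SM in auto)
    have "card (Pos m) = dS m + X m"
      unfolding dS_def X_def using eq c by metis
    then show ?thesis using c4[OF mV] by simp
  qed
  have ge1: "1 \<le> dS u" if u: "u \<in> ?S" for u
  proof -
    obtain z where "E x z \<and> \<not> N x z \<and> E u z \<and> (N u z \<longleftrightarrow> False)" using clP[OF xV, of u False] u by blast
    then have "z \<in> Pos u \<inter> ?S" by simp
    then show ?thesis unfolding dS_def using finS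
      by (metis One_nat_def Suc_leI card_gt_0_iff empty_iff finite_Int)
  qed
  have le2: "X m \<le> 2" if m: "m \<in> ?M" for m
  proof -
    obtain z where z: "N x z \<and> E m z \<and> (N m z \<longleftrightarrow> True)" using clN[OF xV, of m True] m by blast
    have "Pos m \<inter> ?M \<subseteq> ?M - {m, z}" using z Pirr by auto
    moreover have "card (?M - {m, z}) = 2"
    proof -
      have "m \<noteq> z" using z irr by blast
      moreover have "{m, z} \<subseteq> ?M" using z m by auto
      ultimately show ?thesis using cM finM by (simp add: card_Diff_subset)
    qed
    ultimately show ?thesis unfolding X_def using finM by (metis card_mono finite_Diff)
  qed
  have cnt: "X u = (\<Sum>m\<in>?M. if P u m then 1 else 0)" for u
  proof -
    have "Pos u \<inter> ?M = {m\<in>?M. P u m}" by blast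
    then have "X u = card {m\<in>?M. P u m}" unfolding X_def by simp
    also have "\<dots> = (\<Sum>m\<in>{m\<in>?M. P u m}. 1)" by (rule card_eq_sum)
    also have "\<dots> = (\<Sum>m\<in>?M. if P u m then 1 else 0)" using finM by (rule sum.inter_filter)
    finally show ?thesis .
  qed
  have cnt2: "dS u = (\<Sum>m\<in>?S. if P u m then 1 else 0)" for u
  proof -
    have "Pos u \<inter> ?S = {m\<in>?S. P u m}" by blast
    then have "dS u = card {m\<in>?S. P u m}" unfolding dS_def by simp
    also have "\<dots> = (\<Sum>m\<in>{m\<in>?S. P u m}. 1)" by (rule card_eq_sum)
    also have "\<dots> = (\<Sum>m\<in>?S. if P u m then 1 else 0)" using finS by (rule sum.inter_filter)
    finally show ?thesis .
  qed
  have swap: "(\<Sum>u\<in>?S. X u) = (\<Sum>m\<in>?M. dS m)"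
  proof -
    have "(\<Sum>u\<in>?S. X u) = (\<Sum>u\<in>?S. \<Sum>m\<in>?M. if P u m then 1 else 0)" using cnt by simp
    also have "\<dots> = (\<Sum>m\<in>?M. \<Sum>u\<in>?S. if P u m then 1 else 0)" by (rule sum.swap)
    also have "\<dots> = (\<Sum>m\<in>?M. \<Sum>u\<in>?S. if P m u then 1 else 0)"
      by (intro sum.cong refl) (metis Psym)
    also have "\<dots> = (\<Sum>m\<in>?M. dS m)" using cnt2 by simp
    finally show ?thesis .
  qed
  have s1: "(\<Sum>u\<in>?S. dS u) + (\<Sum>u\<in>?S. X u) = 12"
  proof -
    have "(\<Sum>u\<in>?S. dS u) + (\<Sum>u\<in>?S. X u) = (\<Sum>u\<in>?S. dS u + X u)" by (simp add: sum.distrib)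
    also have "\<dots> = (\<Sum>u\<in>?S. 3)" using eqS by (intro sum.cong) auto
    finally show ?thesis using cS by simp
  qed
  have s2: "(\<Sum>m\<in>?M. dS m) + (\<Sum>m\<in>?M. X m) = 16"
  proof -
    have "(\<Sum>m\<in>?M. dS m) + (\<Sum>m\<in>?M. X m) = (\<Sum>m\<in>?M. dS m + X m)" by (simp add: sum.distrib)
    also have "\<dots> = (\<Sum>m\<in>?M. 4)" using eqM by (intro sum.cong) auto
    finally show ?thesis using cM by simp
  qed
  have s3: "(\<Sum>m\<in>?M. X m) \<le> 8"
    using sum_bounded_above[of ?M X 2] le2 cM by simp
  have s4: "(\<Sum>u\<in>?S. dS u) \<le> 4" using s1 s2 s3 swap by linarith
  have "dS q \<le> 1"
  proof (rule ccontr)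
    assume "\<not> dS q \<le> 1"
    then have "2 \<le> dS q" by simp
    moreover have "(\<Sum>u\<in>?S - {q}. dS u) \<ge> 3"
    proof -
      have "(\<Sum>u\<in>?S - {q}. dS u) \<ge> card (?S - {q}) * 1"
        using sum_bounded_below[of "?S - {q}" 1 dS] ge1 by simp
      moreover have "card (?S - {q}) = 3" using cS q finS by simp
      ultimately show ?thesis by simp
    qed
    moreover have "(\<Sum>u\<in>?S. dS u) = dS q + (\<Sum>u\<in>?S - {q}. dS u)"
      using q finS by (simp add: sum.remove)
    ultimately show False using s4 by linarith
  qed
  then show ?thesis using ge1[OF q] unfolding dS_def by (simp add: Int_commute)
qed

end

lemma F9_explicit: "F9 = {(0,0),(0,1),(0,2),(1,0),(1,1),(1,2),(2,0),(2,1),(2,2)}"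
proof -
  have "{0..2::int} = {0,1,2}" by auto
  then show ?thesis unfolding F9_def by auto
qed

lemma card_F9: "card F9 = 9"
  unfolding F9_explicit by simp

lemma sq_vals: "w \<in> F9 \<Longrightarrow> f9_mul w w \<in> {(0,0),(1,0),(2,0),(0,1),(0,2)}"
  unfolding F9_explicit by (elim insertE) (simp_all add: f9_mul_def)

lemma nonsq_char: "f9_nonsquare z \<longleftrightarrow> z \<in> F9 \<and> fst z \<noteq> 0 \<and> snd z \<noteq> 0"
proof
  assume z: "f9_nonsquare z"
  then have zF: "z \<in> F9" and ns: "\<And>w. w \<in> F9 \<Longrightarrow> f9_mul w w \<noteq> z" unfolding f9_nonsquare_def by auto
  have "f9_mul (0,0) (0,0) = (0,0)" "f9_mul (1,0) (1,0) = (1,0)" "f9_mul (0,1) (0,1) = (2,0)"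
       "f9_mul (1,2) (1,2) = (0,1)" "f9_mul (1,1) (1,1) = (0,2)" by (simp_all add: f9_mul_def)
  moreover have "(0,0) \<in> F9" "(1,0) \<in> F9" "(0,1) \<in> F9" "(1,2) \<in> F9" "(1,1) \<in> F9"
    unfolding F9_explicit by simp_all
  ultimately have "z \<notin> {(0,0),(1,0),(2,0),(0,1),(0,2)}" using ns by (metis empty_iff insertE)
  then show "z \<in> F9 \<and> fst z \<noteq> 0 \<and> snd z \<noteq> 0" using zF unfolding F9_explicit by auto
next
  assume z: "z \<in> F9 \<and> fst z \<noteq> 0 \<and> snd z \<noteq> 0"
  have "f9_mul w w \<noteq> z" if "w \<in> F9" for w using sq_vals[OF that] z by auto
  then show "f9_nonsquare z" using z unfolding f9_nonsquare_def by auto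
qed

lemma mod3_eq0: "a \<in> {0,1,2} \<Longrightarrow> b \<in> {0,1,2} \<Longrightarrow> ((a - b) mod 3 = 0 \<longleftrightarrow> a = (b::int))"
  by auto

lemma SP9_N_char:
  assumes "u \<in> F9" "v \<in> F9"
  shows "SP9_N u v \<longleftrightarrow> fst u \<noteq> fst v \<and> snd u \<noteq> snd v"
proof -
  have c: "fst u \<in> {0,1,2}" "snd u \<in> {0,1,2}" "fst v \<in> {0,1,2}" "snd v \<in> {0,1,2}"
    using assms unfolding F9_explicit by auto
  have sub: "f9_sub v u \<in> F9" unfolding f9_sub_def F9_def by auto
  have "SP9_N u v \<longleftrightarrow> u \<noteq> v \<and> fst (f9_sub v u) \<noteq> 0 \<and> snd (f9_sub v u) \<noteq> 0"
    unfolding SP9_N_def SP9_E_def nonsq_char using assms sub by auto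
  also have "\<dots> \<longleftrightarrow> fst u \<noteq> fst v \<and> snd u \<noteq> snd v"
    unfolding f9_sub_def using mod3_eq0[OF c(3) c(1)] mod3_eq0[OF c(4) c(2)] by (cases u, cases v) auto
  finally show ?thesis .
qed

lemma card1_mem: "card A = 1 \<Longrightarrow> a \<in> A \<Longrightarrow> A = {a}"
  by (metis card_1_singletonE singletonD)

lemma inter1:
  assumes finM: "finite M" and cM: "card M = 4" and AM: "A \<subseteq> M" and BM: "B \<subseteq> M"
    and cA: "card A = 2" and cB: "card B = 2" and BB: "B \<inter> B' = {}" "B \<union> B' = M"
    and ne: "A \<noteq> B" "A \<noteq> B'"
  shows "card (A \<inter> B) = 1"
proof -
  have finA: "finite A" "finite B" using finM AM BM finite_subset by auto
  have finB': "finite B'" using finM BB(2) by auto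
  have "card (A \<inter> B) \<le> 2" using card_mono[OF finA(1), of "A \<inter> B"] cA by simp
  moreover have "card (A \<inter> B) \<noteq> 2"
  proof
    assume "card (A \<inter> B) = 2"
    then have "A \<inter> B = A" using card_subset_eq[OF finA(1), of "A \<inter> B"] cA by simp
    then have "A \<subseteq> B" by blast
    then have "A = B" using card_subset_eq[OF finA(2)] cA cB by simp
    then show False using ne by simp
  qed
  moreover have "card (A \<inter> B) \<noteq> 0"
  proof
    assume "card (A \<inter> B) = 0"
    then have "A \<inter> B = {}" using finA by simp
    then have AB': "A \<subseteq> B'" using AM BB by blast
    have "card M = card B + card B'" using BB finA(2) finB' by (metis card_Un_disjoint)
    then have "card B' = 2" using cM cB by simp
    then have "A = B'" using card_subset_eq[OF finB' AB'] cA by simp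
    then show False using ne by simp
  qed
  ultimately show ?thesis by linarith
qed

context sg9
begin

lemma partner_split:
  assumes x0: "x0 \<in> V" and a: "a \<in> Pos x0" and pa: "Pos x0 \<inter> Pos a = {a'}"
  shows "Pos a = insert x0 (insert a' (Pos a \<inter> Ng x0))"
proof
  show "Pos a \<subseteq> insert x0 (insert a' (Pos a \<inter> Ng x0))"
  proof
    fix y assume y: "y \<in> Pos a"
    then have "y \<in> V" using PosV by blast
    then have "y = x0 \<or> y \<in> Pos x0 \<or> y \<in> Ng x0" using Vsplit[OF x0] by blast
    then show "y \<in> insert x0 (insert a' (Pos a \<inter> Ng x0))" using y pa by blast
  qed
  show "insert x0 (insert a' (Pos a \<inter> Ng x0)) \<subseteq> Pos a" using a pa Psym by blast
qed

lemma partner_card: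
  assumes x0: "x0 \<in> V" and a: "a \<in> Pos x0" and pa: "Pos x0 \<inter> Pos a = {a'}"
  shows "card (Pos a \<inter> Ng x0) = 2"
proof -
  have aV: "a \<in> V" using a PosV by blast
  have a': "a' \<in> Pos x0" using pa by blast
  have n1: "x0 \<notin> insert a' (Pos a \<inter> Ng x0)" using a' Pirr Nirr by blast
  have n2: "a' \<notin> Pos a \<inter> Ng x0" using a' by blast
  have f: "finite (Pos a \<inter> Ng x0)" using finNg by blast
  have "card (Pos a) = Suc (Suc (card (Pos a \<inter> Ng x0)))"
    using partner_split[OF x0 a pa] n1 n2 f by (metis card_insert_disjoint finite_insert)
  then show ?thesis using c4[OF aV] by simp
qed

lemma partner_disj:
  assumes x0: "x0 \<in> V" and a: "a \<in> Pos x0" and a': "a' \<in> Pos a" and a'': "a' \<in> Pos x0"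
  shows "Pos a \<inter> Pos a' \<inter> Ng x0 = {}"
proof (rule ccontr)
  assume "Pos a \<inter> Pos a' \<inter> Ng x0 \<noteq> {}"
  then obtain m where m: "m \<in> Pos a" "m \<in> Pos a'" "m \<in> Ng x0" by blast
  have aV: "a \<in> V" using a PosV by blast
  have c1: "card (Pos a \<inter> Pos a') = 1" using D1[OF aV a'] .
  have "x0 \<in> Pos a" "x0 \<in> Pos a'" using a a'' Psym by blast+
  then have "{x0, m} \<subseteq> Pos a \<inter> Pos a'" using m by blast
  moreover have "x0 \<noteq> m" using m Nirr by blast
  ultimately have "2 \<le> card (Pos a \<inter> Pos a')"
    using card_mono[of "Pos a \<inter> Pos a'" "{x0, m}"] finPos by fastforce
  then show False using c1 by simp
qed

lemma partner_adj:
  assumes x0: "x0 \<in> V" and a: "a \<in> Pos x0" and pa: "Pos x0 \<inter> Pos a = {a'}"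
    and mm: "Pos a \<inter> Ng x0 = {m, m'}"
  shows "P m m'"
proof -
  have aV: "a \<in> V" using a PosV by blast
  have m: "m \<in> Pos a" "m \<in> Ng x0" using mm by blast+
  obtain z where z: "E a z \<and> \<not> N a z \<and> E m z \<and> (N m z \<longleftrightarrow> False)" using clP[OF aV, of m False] m by blast
  have zin: "z \<in> insert x0 (insert a' {m, m'})" using partner_split[OF x0 a pa] mm z by blast
  have "z \<noteq> x0" using z m Nsym by blast
  moreover have "z \<noteq> a'"
  proof
    assume "z = a'"
    have "a' \<in> Pos a" "a' \<in> Pos x0" using pa by blast+
    then have "Pos a \<inter> Pos a' \<inter> Ng x0 = {}" using partner_disj[OF x0 a] by blast
    then show False using m z \<open>z = a'\<close> Psym by blast
  qed
  moreover have "z \<noteq> m" using z irr by blast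
  ultimately have "z = m'" using zin by blast
  then show ?thesis using z by simp
qed

lemma no_double:
  assumes ab: "a \<noteq> b" and mm: "m \<noteq> m'" and sub: "{m, m'} \<subseteq> Pos a \<inter> Pos b" and p: "P m m'"
  shows False
proof -
  have mV: "m \<in> V" using sub PosV by blast
  have c1: "card (Pos m \<inter> Pos m') = 1" using D1[OF mV] p by simp
  have "{a, b} \<subseteq> Pos m \<inter> Pos m'" using sub Psym by blast
  then have "2 \<le> card (Pos m \<inter> Pos m')" using card_mono[of "Pos m \<inter> Pos m'" "{a, b}"] finPos ab by fastforce
  then show False using c1 by simp
qed

end

context sg9
begin

lemma assemble:
  assumes dist: "x0 \<noteq> a1" "x0 \<noteq> a2" "x0 \<noteq> b1" "x0 \<noteq> b2" "x0 \<noteq> c11" "x0 \<noteq> c12" "x0 \<noteq> c21" "x0 \<noteq> c22" "a1 \<noteq> a2" "a1 \<noteq> b1" "a1 \<noteq> b2" "a1 \<noteq> c11" "a1 \<noteq> c12" "a1 \<noteq> c21" "a1 \<noteq> c22" "a2 \<noteq> b1" "a2 \<noteq> b2" "a2 \<noteq> c11" "a2 \<noteq> c12" "a2 \<noteq> c21" "a2 \<noteq> c22" "b1 \<noteq> b2" "b1 \<noteq> c11" "b1 \<noteq> c12" "b1 \<noteq> c21" "b1 \<noteq> c22" "b2 \<noteq> c11" "b2 \<noteq> c12" "b2 \<noteq> c21" "b2 \<noteq> c22" "c11 \<noteq> c12" "c11 \<noteq> c21" "c11 \<noteq> c22" "c12 \<noteq> c21" "c12 \<noteq> c22" "c21 \<noteq>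 c22"
    and Veq: "V = {x0, a1, a2, b1, b2, c11, c12, c21, c22}"
    and pos: "P x0 a1" "P x0 a2" "P x0 b1" "P x0 b2" "P a1 a2" "P a1 c11" "P a1 c12" "P a2 c21" "P a2 c22" "P b1 b2" "P b1 c11" "P b1 c21" "P b2 c12" "P b2 c22" "P c11 c12" "P c11 c21" "P c12 c22" "P c21 c22"
    and neg: "\<not> P x0 c11" "\<not> P x0 c12" "\<not> P x0 c21" "\<not> P x0 c22" "\<not> P a1 b1" "\<not> P a1 b2" "\<not> P a1 c21" "\<not> P a1 c22" "\<not> P a2 b1" "\<not> P a2 b2" "\<not> P a2 c11" "\<not> P a2 c12" "\<not> P b1 c12" "\<not> P b1 c22" "\<not> P b2 c11" "\<not> P b2 c21" "\<not> P c11 c22" "\<not> P c12 c21"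
  shows "\<exists>f. signified_iso V E N F9 SP9_E SP9_N f"
proof -
  define f where "f = (\<lambda>v. if v = x0 then (0::int, 0::int) else if v = a1 then (1::int, 0::int) else if v = a2 then (2::int, 0::int) else if v = b1 then (0::int, 1::int) else if v = b2 then (0::int, 2::int) else if v = c11 then (1::int, 1::int) else if v = c12 then (1::int, 2::int) else if v = c21 then (2::int, 1::int) else (2, 2))"
  have fv: "f x0 = (0, 0)" "f a1 = (1, 0)" "f a2 = (2, 0)" "f b1 = (0, 1)" "f b2 = (0, 2)" "f c11 = (1, 1)" "f c12 = (1, 2)" "f c21 = (2, 1)" "f c22 = (2, 2)"
    using dist unfolding f_def by simp_all
  have img: "f ` V = F9" unfolding Veq F9_explicit using fv by auto
  have inj: "inj_on f V"
    by (rule eq_card_imp_inj_on[OF fin]) (simp add: img card_F9 c9)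
  have bij: "bij_betw f V F9" using inj img by (simp add: bij_betw_def)
  have nN: "\<not> N u v" if "P u v" for u v using that by simp
  have yN: "N u v" if "\<not> P u v" "u \<in> V" "v \<in> V" "u \<noteq> v" for u v using PorN that by blast
  have mem: "x0 \<in> V" "a1 \<in> V" "a2 \<in> V" "b1 \<in> V" "b2 \<in> V" "c11 \<in> V" "c12 \<in> V" "c21 \<in> V" "c22 \<in> V" using Veq by simp_all
  have N0: "N x0 c11" using yN[OF neg(1) mem(1) mem(6) dist(5)] .
  have N1: "N x0 c12" using yN[OF neg(2) mem(1) mem(7) dist(6)] .
  have N2: "N x0 c21" using yN[OF neg(3) mem(1) mem(8) dist(7)] .
  have N3: "N x0 c22" using yN[OF neg(4) mem(1) mem(9) dist(8)] .
  have N4: "N a1 b1" using yN[OF neg(5) mem(2) mem(4) dist(10)] .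
  have N5: "N a1 b2" using yN[OF neg(6) mem(2) mem(5) dist(11)] .
  have N6: "N a1 c21" using yN[OF neg(7) mem(2) mem(8) dist(14)] .
  have N7: "N a1 c22" using yN[OF neg(8) mem(2) mem(9) dist(15)] .
  have N8: "N a2 b1" using yN[OF neg(9) mem(3) mem(4) dist(16)] .
  have N9: "N a2 b2" using yN[OF neg(10) mem(3) mem(5) dist(17)] .
  have N10: "N a2 c11" using yN[OF neg(11) mem(3) mem(6) dist(18)] .
  have N11: "N a2 c12" using yN[OF neg(12) mem(3) mem(7) dist(19)] .
  have N12: "N b1 c12" using yN[OF neg(13) mem(4) mem(7) dist(24)] .
  have N13: "N b1 c22" using yN[OF neg(14) mem(4) mem(9) dist(26)] .
  have N14: "N b2 c11" using yN[OF neg(15) mem(5) mem(6) dist(27)] .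
  have N15: "N b2 c21" using yN[OF neg(16) mem(5) mem(8) dist(29)] .
  have N16: "N c11 c22" using yN[OF neg(17) mem(6) mem(9) dist(33)] .
  have N17: "N c12 c21" using yN[OF neg(18) mem(7) mem(8) dist(34)] .
  have Nt: "N u v \<longleftrightarrow> (fst (f u) \<noteq> fst (f v) \<and> snd (f u) \<noteq> snd (f v))"
    if "u \<in> V" "v \<in> V" for u v
  proof -
    have pos': "P v u" if "P u v" for u v using that Psym by blast
    have neg': "\<not> P v u" if "\<not> P u v" for u v using that Psym by blast
    note P1 = pos[THEN nN] pos[THEN pos', THEN nN]
    note N1 = N0 N0[THEN Nsym] N1 N1[THEN Nsym] N2 N2[THEN Nsym] N3 N3[THEN Nsym] N4 N4[THEN Nsym] N5 N5[THEN Nsym] N6 N6[THEN Nsym] N7 N7[THEN Nsym] N8 N8[THEN Nsym] N9 N9[THEN Nsym] N10 N10[THEN Nsym] N11 N11[THEN Nsym] N12 N12[THEN Nsym] N13 N13[THEN Nsym] N14 N14[THEN Nsym] N15 N15[THEN Nsym] N16 N16[THEN Nsym] N17 N17[THEN Nsym]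
    show ?thesis using that dist[symmetric] dist unfolding Veq
      by (auto simp: fv P1 N1 Nirr)
  qed
  have "\<forall>x\<in>V. \<forall>y\<in>V. (SP9_E (f x) (f y) \<longleftrightarrow> E x y) \<and> (SP9_N (f x) (f y) \<longleftrightarrow> N x y)"
  proof (intro ballI conjI)
    fix x y assume xy: "x \<in> V" "y \<in> V"
    have fx: "f x \<in> F9" "f y \<in> F9" using img xy by auto
    have "f x = f y \<longleftrightarrow> x = y" using inj xy by (meson inj_on_eq_iff)
    then show "SP9_E (f x) (f y) \<longleftrightarrow> E x y" unfolding SP9_E_def using fx xy comp irr by auto
    show "SP9_N (f x) (f y) \<longleftrightarrow> N x y" using SP9_N_char[OF fx] Nt[OF xy] by simp
  qed
  then show ?thesis using bij unfolding signified_iso_def by blast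
qed

end

context sg9
begin

lemma iso_exists: "\<exists>f. signified_iso V E N F9 SP9_E SP9_N f"
proof -
  obtain x0 where x0: "x0 \<in> V" using c9 by (metis card.empty ex_in_conv zero_neq_numeral)
  define S where "S = Pos x0"
  define M where "M = Ng x0"
  have cS: "card S = 4" and cM: "card M = 4" using c4[OF x0] unfolding S_def M_def by auto
  have finS: "finite S" and finM: "finite M" unfolding S_def M_def using finPos finNg by auto
  have SMd: "S \<inter> M = {}" unfolding S_def M_def by blast
  have xS: "x0 \<notin> S" "x0 \<notin> M" unfolding S_def M_def using Pirr Nirr by auto
  have VSM: "V = insert x0 (S \<union> M)" unfolding S_def M_def using Vsplit[OF x0] .
  obtain a1 where a1: "a1 \<in> S" using cS by (metis card.empty ex_in_conv zero_neq_numeral)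
  obtain a2 where Sa1: "S \<inter> Pos a1 = {a2}"
    using D1[OF x0 a1[unfolded S_def]] unfolding S_def by (metis card_1_singletonE)
  have a2: "a2 \<in> S" "P a1 a2" using Sa1 by blast+
  have Sa2: "S \<inter> Pos a2 = {a1}"
    using card1_mem[OF D1[OF x0 a2(1)[unfolded S_def]]] a1 a2 Psym unfolding S_def by blast
  have a12: "a1 \<noteq> a2" using a2 Pirr by blast
  have "card (S - {a1, a2}) = 2"
  proof -
    have "{a1, a2} \<subseteq> S" using a1 a2 by blast
    moreover have "card {a1, a2} = 2" using a12 by simp
    ultimately show ?thesis using cS finS by (simp add: card_Diff_subset)
  qed
  then obtain b1 b2 where b: "S - {a1, a2} = {b1, b2}" "b1 \<noteq> b2" by (metis card_2_iff)
  have bS: "b1 \<in> S" "b2 \<in> S" "b1 \<noteq> a1" "b1 \<noteq> a2" "b2 \<noteq> a1" "b2 \<noteq> a2" using b by blast+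
  have Seq: "S = {a1, a2, b1, b2}" using b a1 a2 by blast
  have nPab: "\<not> P a1 b1" "\<not> P a1 b2" "\<not> P a2 b1" "\<not> P a2 b2"
    using Sa1 Sa2 bS by blast+
  obtain w where w: "S \<inter> Pos b1 = {w}"
    using D1[OF x0 bS(1)[unfolded S_def]] unfolding S_def by (metis card_1_singletonE)
  have "w = b2"
  proof -
    have "w \<in> S" "P b1 w" using w by blast+
    moreover have "w \<noteq> a1" "w \<noteq> a2" using nPab \<open>P b1 w\<close> Psym by blast+
    moreover have "w \<noteq> b1" using \<open>P b1 w\<close> Pirr by blast
    ultimately show ?thesis using Seq by blast
  qed
  then have Sb1: "S \<inter> Pos b1 = {b2}" using w by simp
  have Pb12: "P b1 b2" using Sb1 by blast
  have Sb2: "S \<inter> Pos b2 = {b1}"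
    using card1_mem[OF D1[OF x0 bS(2)[unfolded S_def]]] bS Pb12 Psym unfolding S_def by blast
  define A1 where "A1 = Pos a1 \<inter> M"
  define A2 where "A2 = Pos a2 \<inter> M"
  define B1 where "B1 = Pos b1 \<inter> M"
  define B2 where "B2 = Pos b2 \<inter> M"
  have aS': "a1 \<in> Pos x0" "a2 \<in> Pos x0" "b1 \<in> Pos x0" "b2 \<in> Pos x0" using a1 a2 bS unfolding S_def by auto
  have Sa1': "Pos x0 \<inter> Pos a1 = {a2}" and Sa2': "Pos x0 \<inter> Pos a2 = {a1}"
    and Sb1': "Pos x0 \<inter> Pos b1 = {b2}" and Sb2': "Pos x0 \<inter> Pos b2 = {b1}"
    using Sa1 Sa2 Sb1 Sb2 unfolding S_def by auto
  have cA1: "card A1 = 2" unfolding A1_def M_def by (rule partner_card[OF x0 aS'(1) Sa1'])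
  have cA2: "card A2 = 2" unfolding A2_def M_def by (rule partner_card[OF x0 aS'(2) Sa2'])
  have cB1: "card B1 = 2" unfolding B1_def M_def by (rule partner_card[OF x0 aS'(3) Sb1'])
  have cB2: "card B2 = 2" unfolding B2_def M_def by (rule partner_card[OF x0 aS'(4) Sb2'])
  have subM: "A1 \<subseteq> M" "A2 \<subseteq> M" "B1 \<subseteq> M" "B2 \<subseteq> M" unfolding A1_def A2_def B1_def B2_def by auto
  have dA: "A1 \<inter> A2 = {}"
    using partner_disj[OF x0 aS'(1), of a2] a2 aS' unfolding A1_def A2_def M_def by blast
  have dB: "B1 \<inter> B2 = {}"
    using partner_disj[OF x0 aS'(3), of b2] Pb12 aS' unfolding B1_def B2_def M_def by blast
  have finAB: "finite A1" "finite A2" "finite B1" "finite B2"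
    using finite_subset[OF subM(1) finM] finite_subset[OF subM(2) finM]
      finite_subset[OF subM(3) finM] finite_subset[OF subM(4) finM] by simp_all
  have uA: "A1 \<union> A2 = M"
  proof -
    have "card (A1 \<union> A2) = 4" using card_Un_disjoint[OF finAB(1,2) dA] cA1 cA2 by simp
    then show ?thesis using card_subset_eq[OF finM, of "A1 \<union> A2"] subM cM by simp
  qed
  have uB: "B1 \<union> B2 = M"
  proof -
    have "card (B1 \<union> B2) = 4" using card_Un_disjoint[OF finAB(3,4) dB] cB1 cB2 by simp
    then show ?thesis using card_subset_eq[OF finM, of "B1 \<union> B2"] subM cM by simp
  qed
  obtain p p' where pp: "A1 = {p, p'}" "p \<noteq> p'" using cA1 by (metis card_2_iff)
  have Ppp: "P p p'" using partner_adj[OF x0 aS'(1) Sa1'] pp unfolding A1_def M_def by blast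
  obtain q q' where qq: "A2 = {q, q'}" "q \<noteq> q'" using cA2 by (metis card_2_iff)
  have Pqq: "P q q'" using partner_adj[OF x0 aS'(2) Sa2'] qq unfolding A2_def M_def by blast
  have dab: "a1 \<noteq> b1" "a1 \<noteq> b2" "a2 \<noteq> b1" "a2 \<noteq> b2" using bS by auto
  have ne1: "A1 \<noteq> B1" "A1 \<noteq> B2"
  proof -
    show "A1 \<noteq> B1"
    proof
      assume "A1 = B1"
      then have "{p, p'} \<subseteq> Pos a1 \<inter> Pos b1" using pp unfolding A1_def B1_def by blast
      then show False using no_double[OF dab(1) pp(2) _ Ppp] by blast
    qed
    show "A1 \<noteq> B2"
    proof
      assume "A1 = B2"
      then have "{p, p'} \<subseteq> Pos a1 \<inter> Pos b2" using pp unfolding A1_def B2_def by blast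
      then show False using no_double[OF dab(2) pp(2) _ Ppp] by blast
    qed
  qed
  have ne2: "A2 \<noteq> B1" "A2 \<noteq> B2"
  proof -
    show "A2 \<noteq> B1"
    proof
      assume "A2 = B1"
      then have "{q, q'} \<subseteq> Pos a2 \<inter> Pos b1" using qq unfolding A2_def B1_def by blast
      then show False using no_double[OF dab(3) qq(2) _ Pqq] by blast
    qed
    show "A2 \<noteq> B2"
    proof
      assume "A2 = B2"
      then have "{q, q'} \<subseteq> Pos a2 \<inter> Pos b2" using qq unfolding A2_def B2_def by blast
      then show False using no_double[OF dab(4) qq(2) _ Pqq] by blast
    qed
  qed
  have dB': "B2 \<inter> B1 = {}" "B2 \<union> B1 = M" using dB uB by auto
  have i11: "card (A1 \<inter> B1) = 1" by (rule inter1[OF finM cM subM(1) subM(3) cA1 cB1 dB uB ne1])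
  have i12: "card (A1 \<inter> B2) = 1" by (rule inter1[OF finM cM subM(1) subM(4) cA1 cB2 dB' ne1(2) ne1(1)])
  have i21: "card (A2 \<inter> B1) = 1" by (rule inter1[OF finM cM subM(2) subM(3) cA2 cB1 dB uB ne2])
  have i22: "card (A2 \<inter> B2) = 1" by (rule inter1[OF finM cM subM(2) subM(4) cA2 cB2 dB' ne2(2) ne2(1)])
  obtain c11 where c11: "A1 \<inter> B1 = {c11}" using i11 by (metis card_1_singletonE)
  obtain c12 where c12: "A1 \<inter> B2 = {c12}" using i12 by (metis card_1_singletonE)
  obtain c21 where c21: "A2 \<inter> B1 = {c21}" using i21 by (metis card_1_singletonE)
  obtain c22 where c22: "A2 \<inter> B2 = {c22}" using i22 by (metis card_1_singletonE)
  have cin: "c11 \<in> A1" "c11 \<in> B1" "c12 \<in> A1" "c12 \<in> B2" "c21 \<in> A2" "c21 \<in> B1" "c22 \<in> A2" "c22 \<in> B2"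
    using c11 c12 c21 c22 by blast+
  have cM': "c11 \<in> M" "c12 \<in> M" "c21 \<in> M" "c22 \<in> M" using cin subM by blast+
  have A1eq: "Pos a1 \<inter> Ng x0 = {c11, c12}" using uB c11 c12 subM unfolding A1_def M_def by blast
  have A2eq: "Pos a2 \<inter> Ng x0 = {c21, c22}" using uB c21 c22 subM unfolding A2_def M_def by blast
  have B1eq: "Pos b1 \<inter> Ng x0 = {c11, c21}" using uA c11 c21 subM unfolding B1_def M_def by blast
  have B2eq: "Pos b2 \<inter> Ng x0 = {c12, c22}" using uA c12 c22 subM unfolding B2_def M_def by blast
  have dc: "c11 \<noteq> c12" "c11 \<noteq> c21" "c11 \<noteq> c22" "c12 \<noteq> c21" "c12 \<noteq> c22" "c21 \<noteq> c22"
    using cin dA dB by blast+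
  have Pc: "P c11 c12" "P c21 c22" "P c11 c21" "P c12 c22"
    using partner_adj[OF x0 aS'(1) Sa1' A1eq] partner_adj[OF x0 aS'(2) Sa2' A2eq]
      partner_adj[OF x0 aS'(3) Sb1' B1eq] partner_adj[OF x0 aS'(4) Sb2' B2eq] by auto
  have Pac: "P a1 c11" "P a1 c12" "P a2 c21" "P a2 c22" "P b1 c11" "P b1 c21" "P b2 c12" "P b2 c22"
    using cin unfolding A1_def A2_def B1_def B2_def by blast+
  have nPac: "\<not> P a1 c21" "\<not> P a1 c22" "\<not> P a2 c11" "\<not> P a2 c12"
      "\<not> P b1 c12" "\<not> P b1 c22" "\<not> P b2 c11" "\<not> P b2 c21"
    using cin cM' dA dB unfolding A1_def A2_def B1_def B2_def by blast+
  have nPx: "\<not> P x0 c11" "\<not> P x0 c12" "\<not> P x0 c21" "\<not> P x0 c22" using cM' unfolding M_def by auto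
  have SMc: "a1 \<noteq> c11" "a1 \<noteq> c12" "a1 \<noteq> c21" "a1 \<noteq> c22" "a2 \<noteq> c11" "a2 \<noteq> c12" "a2 \<noteq> c21" "a2 \<noteq> c22"
      "b1 \<noteq> c11" "b1 \<noteq> c12" "b1 \<noteq> c21" "b1 \<noteq> c22" "b2 \<noteq> c11" "b2 \<noteq> c12" "b2 \<noteq> c21" "b2 \<noteq> c22"
    using cM' a1 a2 bS SMd by blast+
  have nPcc: "\<not> P c11 c22" "\<not> P c12 c21"
  proof -
    have c11V: "c11 \<in> V" and c12V: "c12 \<in> V" using cM' NgV unfolding M_def by blast+
    have s1: "{a1, b1, c12, c21} \<subseteq> Pos c11" using Pac Pc Psym by blast
    have "card {a1, b1, c12, c21} = 4" using dab SMc dc by simp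
    then have eq1: "Pos c11 = {a1, b1, c12, c21}" using card_subset_eq[OF finPos s1] c4[OF c11V] by simp
    have nin1: "c22 \<notin> {a1, b1, c12, c21}" using dab SMc dc by auto
    show "\<not> P c11 c22"
    proof
      assume "P c11 c22"
      then have "c22 \<in> Pos c11" by simp
      then have "c22 \<in> {a1, b1, c12, c21}" unfolding eq1 .
      with nin1 show False by blast
    qed
    have s2: "{a1, b2, c11, c22} \<subseteq> Pos c12" using Pac Pc Psym by blast
    have "card {a1, b2, c11, c22} = 4" using dab SMc dc by simp
    then have eq2: "Pos c12 = {a1, b2, c11, c22}" using card_subset_eq[OF finPos s2] c4[OF c12V] by simp
    have nin2: "c21 \<notin> {a1, b2, c11, c22}" using dab SMc dc by auto
    show "\<not> P c12 c21"
    proof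
      assume "P c12 c21"
      then have "c21 \<in> Pos c12" by simp
      then have "c21 \<in> {a1, b2, c11, c22}" unfolding eq2 .
      with nin2 show False by blast
    qed
  qed
  have Px: "P x0 a1" "P x0 a2" "P x0 b1" "P x0 b2" using aS' by auto
  have xd: "x0 \<noteq> a1" "x0 \<noteq> a2" "x0 \<noteq> b1" "x0 \<noteq> b2" "x0 \<noteq> c11" "x0 \<noteq> c12" "x0 \<noteq> c21" "x0 \<noteq> c22"
    using xS a1 a2 bS cM' by blast+
  have dist: "x0 \<noteq> a1" "x0 \<noteq> a2" "x0 \<noteq> b1" "x0 \<noteq> b2" "x0 \<noteq> c11" "x0 \<noteq> c12" "x0 \<noteq> c21" "x0 \<noteq> c22" "a1 \<noteq> a2" "a1 \<noteq> b1" "a1 \<noteq> b2" "a1 \<noteq> c11" "a1 \<noteq> c12" "a1 \<noteq> c21" "a1 \<noteq> c22" "a2 \<noteq> b1" "a2 \<noteq> b2" "a2 \<noteq> c11" "a2 \<noteq> c12" "a2 \<noteq> c21" "a2 \<noteq> c22" "b1 \<noteq> b2" "b1 \<noteq> c11" "b1 \<noteq> c12" "b1 \<noteq> c21" "b1 \<noteq> c22" "b2 \<noteq> c11" "b2 \<noteq> c12" "b2 \<noteq> c21" "b2 \<noteq> c22" "c11 \<noteq> c12" "c11 \<noteq> c21" "c11 \<noteq> c22" "c12 \<noteq> c21" "c12 \<noteq> c22" "c21 \<noteq> c22"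
    using xd a12 dab bS b(2) SMc dc by blast+
  have Meq: "M = {c11, c12, c21, c22}" using uA A1eq A2eq unfolding A1_def A2_def M_def by blast
  have Veq: "V = {x0, a1, a2, b1, b2, c11, c12, c21, c22}" using VSM Seq Meq by blast
  have pos: "P x0 a1" "P x0 a2" "P x0 b1" "P x0 b2" "P a1 a2" "P a1 c11" "P a1 c12" "P a2 c21" "P a2 c22" "P b1 b2" "P b1 c11" "P b1 c21" "P b2 c12" "P b2 c22" "P c11 c12" "P c11 c21" "P c12 c22" "P c21 c22"
    using Px a2 Pb12 Pc Pac by blast+
  have neg: "\<not> P x0 c11" "\<not> P x0 c12" "\<not> P x0 c21" "\<not> P x0 c22" "\<not> P a1 b1" "\<not> P a1 b2" "\<not> P a1 c21" "\<not> P a1 c22" "\<not> P a2 b1" "\<not> P a2 b2" "\<not> P a2 c11" "\<not> P a2 c12" "\<not> P b1 c12" "\<not> P b1 c22" "\<not> P b2 c11" "\<not> P b2 c21" "\<not> P c11 c22" "\<not> P c12 c21"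
    using nPx nPab nPac nPcc by blast+
  show ?thesis by (rule assemble[OF dist Veq pos neg])
qed

end

theorem mainTheorem14:
  fixes VH :: "'b set" and EH NH :: "'b \<Rightarrow> 'b \<Rightarrow> bool"
  assumes "signified_graph VH EH NH"
    and "card VH = 9"
    and "\<forall>(V::nat set) E N. signified_graph V E N \<and> outerplanar V E \<longrightarrow>
           (\<exists>g. signified_hom V E N VH EH NH g)"
  shows "\<exists>f. signified_iso VH EH NH F9 SP9_E SP9_N f"
proof -
  note sg = assms(1) and c9 = assms(2) and H = assms(3)
  have fin: "finite VH" and EV: "\<And>x y. EH x y \<Longrightarrow> x \<in> VH \<and> y \<in> VH" and irr: "\<And>x. \<not> EH x x"
    and Esym: "\<And>x y. EH x y \<Longrightarrow> EH y x" and NE: "\<And>x y. NH x y \<Longrightarrow> EH x y"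
    and Nsym: "\<And>x y. NH x y \<Longrightarrow> NH y x"
    using sg unfolding signified_graph_def by blast+
  obtain k where k: "Aset VH EH NH (Suc k) = Aset VH EH NH k" using stab[OF fin] by blast
  have step: "\<exists>y. \<forall>i<14. y i \<in> Aset VH EH NH k \<and> EH x (y i) \<and> (NH x (y i) \<longleftrightarrow> 7 \<le> i) \<and>
           (Suc i < 14 \<longrightarrow> EH (y i) (y (Suc i)) \<and> (NH (y i) (y (Suc i)) \<longleftrightarrow> odd i))"
    if "x \<in> Aset VH EH NH k" for x
    using A_step[of x VH EH NH k] that k by simp
  note ph = phase12[OF sg c9 A_sub A_ne[OF H] step]
  have loc: "sg9 VH EH NH"
    unfolding sg9_def
    using fin c9 EV irr Esym NE Nsym ph by blast
  show ?thesis by (rule sg9.iso_exists[OF loc])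
qed

end
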